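(* Let $(A,\circ,[\cdot,\cdot])$ be a dual pre-Poisson algebra and $(V;l_\circ,r_\circ,l_{[\cdot,\cdot]},r_{[\cdot,\cdot]})$ a finite-dimensional representation of it. Then $(V^*;-l_\circ^*,-l_\circ^*+r_\circ^*,l_{[\cdot,\cdot]}^*,-l_{[\cdot,\cdot]}^*-r_{[\cdot,\cdot]}^* )$ is a representation of $(A,\circ,[\cdot,\cdot])$. Consequently, $A\oplus V^*$ with $$(x+u^* )\circ(y+v^* )=x\circ y-l_\circ^*(x)v^*+(-l_\circ^*+r_\circ^* )(y)u^*,$$ $$[x+u^*,y+v^*]=[x,y]+l_{[\cdot,\cdot]}^*(x)v^*-(l_{[\cdot,\cdot]}^*+r_{[\cdot,\cdot]}^* )(y)u^*$$ is a dual pre-Poisson algebra.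
   Context: Field $\mathbb{F}$ of characteristic $0$. For $f:A\to\mathrm{End}(V)$, $f^*:A\to\mathrm{End}(V^* )$ is given by $\langle f^*(x)v^*,u\rangle=-\langle v^*,f(x)u\rangle$. A dual pre-Poisson algebra $(A,\circ,[\cdot,\cdot])$: $x\circ(y\circ z)=(x\circ y)\circ z=(y\circ x)\circ z$; $[x,[y,z]]=[[x,y],z]+[y,[x,z]]$; $[x,y\circ z]=[x,y]\circ z+y\circ[x,z]$; $[x\circ y,z]=x\circ[y,z]+y\circ[x,z]$; $[x,y]\circ z=-[y,x]\circ z$. A representation $(V;l_\circ,r_\circ,l_{[\cdot,\cdot]},r_{[\cdot,\cdot]})$ is a vector space $V$ with linear maps $A\to\mathrm{End}(V)$ satisfying, for all $x,y\in A$: $r_\circ(x)r_\circ(y)=r_\circ(y\circ x)=l_\circ(y)r_\circ(x)=r_\circ(x)l_\circ(y)$; $l_\circ(x\circ y)=l_\circ(x)l_\circ(y)=l_\circ(y)l_\circ(x)$; $l_{[\cdot,\cdot]}([x,y])=l_{[\cdot,\cdot]}(x)l_{[\cdot,\cdot]}(y)-l_{[\cdot,\cdot]}(y)l_{[\cdot,\cdot]}(x)$; $r_{[\cdot,\cdot]}([x,y])=r_{[\cdot,\cdot]}(y)r_{[\cdot,\cdot]}(x)+l_{[\cdot,\cdot]}(x)r_{[\cdot,\cdot]}(y)$; $r_{[\cdot,\cdot]}(x)r_{[\cdot,\cdot]}(y)=-r_{[\cdot,\cdot]}(x)l_{[\cdot,\cdot]}(y)$; $r_{[\cdot,\cdot]}(x\circ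 y)=r_\circ(y)r_{[\cdot,\cdot]}(x)+l_\circ(x)r_{[\cdot,\cdot]}(y)$; $l_{[\cdot,\cdot]}(x)r_\circ(y)=r_\circ(y)l_{[\cdot,\cdot]}(x)+r_\circ([x,y])$; $l_{[\cdot,\cdot]}(x)l_\circ(y)=l_\circ([x,y])+l_\circ(y)l_{[\cdot,\cdot]}(x)$; $r_{[\cdot,\cdot]}(x)r_\circ(y)=r_\circ([y,x])+l_\circ(y)r_{[\cdot,\cdot]}(x)$; $l_{[\cdot,\cdot]}(x\circ y)=l_\circ(x)l_{[\cdot,\cdot]}(y)+l_\circ(y)l_{[\cdot,\cdot]}(x)$; $r_{[\cdot,\cdot]}(x)(l_\circ-r_\circ)(y)=0$; $r_\circ(x)(l_{[\cdot,\cdot]}+r_{[\cdot,\cdot]})(y)=0$; $l_\circ([x,y]+[y,x])=0$. *)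

theory Defs
  imports Main "HOL.Vector_Spaces" "HOL-Library.Function_Algebras" "HOL-Library.Product_Plus"
begin

text \<open>Substructures (like the dual space, which is the set of
  linear functionals inside the type of all functions) are given by a carrier set.\<close>

definition bilinear_on ::
  "('f::field \<Rightarrow> 'b::ab_group_add \<Rightarrow> 'b) \<Rightarrow> 'b set \<Rightarrow> ('b \<Rightarrow> 'b \<Rightarrow> 'b) \<Rightarrow> bool" where
  "bilinear_on s S m \<longleftrightarrow>
     (\<forall>x\<in>S. \<forall>y\<in>S. m x y \<in> S) \<and>
     (\<forall>x\<in>S. \<forall>y\<in>S. \<forall>z\<in>S. m (x + y) z = m x z + m y z \<and> m x (y + z) = m x y + m x z) \<and>
     (\<forall>c. \<forall>x\<in>S. \<forall>y\<in>S. m (s c x) y = s c (m x y) \<and> m x (s c y) = s c (m x y))"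

definition dual_pre_poisson_on ::
  "('f::field \<Rightarrow> 'b::ab_group_add \<Rightarrow> 'b) \<Rightarrow> 'b set \<Rightarrow> ('b \<Rightarrow> 'b \<Rightarrow> 'b) \<Rightarrow> ('b \<Rightarrow> 'b \<Rightarrow> 'b) \<Rightarrow> bool" where
  "dual_pre_poisson_on s S circ br \<longleftrightarrow>
     vector_space s \<and> module.subspace s S \<and> bilinear_on s S circ \<and> bilinear_on s S br \<and>
     (\<forall>x\<in>S. \<forall>y\<in>S. \<forall>z\<in>S.
        circ x (circ y z) = circ (circ x y) z \<and>
        circ (circ x y) z = circ (circ y x) z \<and>
        br x (br y z) = br (br x y) z + br y (br x z) \<and>
        br x (circ y z) = circ (br x y) z + circ y (br x z) \<and>
        br (circ x y) z = circ x (br y z) + circ y (br x z) \<and>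
        circ (br x y) z = - circ (br y x) z)"

definition lin_action_on ::
  "('f::field \<Rightarrow> 'a::ab_group_add \<Rightarrow> 'a) \<Rightarrow> 'a set \<Rightarrow> ('f \<Rightarrow> 'w::ab_group_add \<Rightarrow> 'w) \<Rightarrow> 'w set
     \<Rightarrow> ('a \<Rightarrow> 'w \<Rightarrow> 'w) \<Rightarrow> bool" where
  "lin_action_on sA A sW W \<rho> \<longleftrightarrow>
     (\<forall>x\<in>A. \<forall>w\<in>W. \<rho> x w \<in> W) \<and>
     (\<forall>x\<in>A. \<forall>w1\<in>W. \<forall>w2\<in>W. \<rho> x (w1 + w2) = \<rho> x w1 + \<rho> x w2) \<and>
     (\<forall>c. \<forall>x\<in>A. \<forall>w\<in>W. \<rho> x (sW c w) = sW c (\<rho> x w)) \<and>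
     (\<forall>x\<in>A. \<forall>y\<in>A. \<forall>w\<in>W. \<rho> (x + y) w = \<rho> x w + \<rho> y w) \<and>
     (\<forall>c. \<forall>x\<in>A. \<forall>w\<in>W. \<rho> (sA c x) w = sW c (\<rho> x w))"

definition dpp_rep_on ::
  "('f::field \<Rightarrow> 'a::ab_group_add \<Rightarrow> 'a) \<Rightarrow> 'a set \<Rightarrow> ('a \<Rightarrow> 'a \<Rightarrow> 'a) \<Rightarrow> ('a \<Rightarrow> 'a \<Rightarrow> 'a)
     \<Rightarrow> ('f \<Rightarrow> 'w::ab_group_add \<Rightarrow> 'w) \<Rightarrow> 'w set
     \<Rightarrow> ('a \<Rightarrow> 'w \<Rightarrow> 'w) \<Rightarrow> ('a \<Rightarrow> 'w \<Rightarrow> 'w) \<Rightarrow> ('a \<Rightarrow> 'w \<Rightarrow> 'w) \<Rightarrow> ('a \<Rightarrow> 'w \<Rightarrow> 'w) \<Rightarrow> bool" where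
  "dpp_rep_on sA A circ br sW W lc rc lb rb \<longleftrightarrow>
     vector_space sW \<and> module.subspace sW W \<and>
     lin_action_on sA A sW W lc \<and> lin_action_on sA A sW W rc \<and>
     lin_action_on sA A sW W lb \<and> lin_action_on sA A sW W rb \<and>
     (\<forall>x\<in>A. \<forall>y\<in>A. \<forall>w\<in>W.
        rc x (rc y w) = rc (circ y x) w \<and>
        rc (circ y x) w = lc y (rc x w) \<and>
        lc y (rc x w) = rc x (lc y w) \<and>
        lc (circ x y) w = lc x (lc y w) \<and>
        lc x (lc y w) = lc y (lc x w) \<and>
        lb (br x y) w = lb x (lb y w) - lb y (lb x w) \<and>
        rb (br x y) w = rb y (rb x w) + lb x (rb y w) \<and>
        rb x (rb y w) = - rb x (lb y w) \<and>
        rb (circ x y) w = rc y (rb x w) + lc x (rb y w) \<and>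
        lb x (rc y w) = rc y (lb x w) + rc (br x y) w \<and>
        lb x (lc y w) = lc (br x y) w + lc y (lb x w) \<and>
        rb x (rc y w) = rc (br y x) w + lc y (rb x w) \<and>
        lb (circ x y) w = lc x (lb y w) + lc y (lb x w) \<and>
        rb x (lc y w - rc y w) = 0 \<and>
        rc x (lb y w + rb y w) = 0 \<and>
        lc (br x y + br y x) w = 0)"

definition dual_space :: "('f::field \<Rightarrow> 'v::ab_group_add \<Rightarrow> 'v) \<Rightarrow> ('v \<Rightarrow> 'f) set" where
  "dual_space sV = {\<phi>. Vector_Spaces.linear sV ((*) :: 'f \<Rightarrow> 'f \<Rightarrow> 'f) \<phi>}"

definition dual_scale :: "'f::field \<Rightarrow> ('v \<Rightarrow> 'f) \<Rightarrow> ('v \<Rightarrow> 'f)" where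
  "dual_scale c \<phi> = (\<lambda>u. c * \<phi> u)"

definition dual_op :: "('a \<Rightarrow> 'v \<Rightarrow> 'v) \<Rightarrow> 'a \<Rightarrow> ('v \<Rightarrow> 'f::field) \<Rightarrow> ('v \<Rightarrow> 'f)" where
  "dual_op f x \<phi> = (\<lambda>u. - \<phi> (f x u))"

definition sum_scale ::
  "('f::field \<Rightarrow> 'a \<Rightarrow> 'a) \<Rightarrow> 'f \<Rightarrow> 'a \<times> ('v \<Rightarrow> 'f) \<Rightarrow> 'a \<times> ('v \<Rightarrow> 'f)" where
  "sum_scale sA c p = (sA c (fst p), dual_scale c (snd p))"

end

theory Submission imports Defs begin

lemma trip_ball:
  assumes "\<And>x u y v z w. u \<in> D \<Longrightarrow> v \<in> D \<Longrightarrow> w \<in> D \<Longrightarrow> P (x, u) (y, v) (z, w)"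
  shows "\<forall>X\<in>UNIV \<times> D. \<forall>Y\<in>UNIV \<times> D. \<forall>Z\<in>UNIV \<times> D. P X Y Z"
  using assms by auto

locale ctx =
  fixes sA :: "'f::field_char_0 \<Rightarrow> 'a::ab_group_add \<Rightarrow> 'a"
    and circ br :: "'a \<Rightarrow> 'a \<Rightarrow> 'a"
    and sV :: "'f \<Rightarrow> 'v::ab_group_add \<Rightarrow> 'v"
    and lc rc lb rb :: "'a \<Rightarrow> 'v \<Rightarrow> 'v"
  assumes alg: "dual_pre_poisson_on sA UNIV circ br"
    and rep: "dpp_rep_on sA UNIV circ br sV UNIV lc rc lb rb"
begin

lemma R: "rc x (rc y w) = rc (circ y x) w"
        "rc (circ y x) w = lc y (rc x w)"
        "lc y (rc x w) = rc x (lc y w)"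
        "lc (circ x y) w = lc x (lc y w)"
        "lc x (lc y w) = lc y (lc x w)"
        "lb (br x y) w = lb x (lb y w) - lb y (lb x w)"
        "rb (br x y) w = rb y (rb x w) + lb x (rb y w)"
        "rb x (rb y w) = - rb x (lb y w)"
        "rb (circ x y) w = rc y (rb x w) + lc x (rb y w)"
        "lb x (rc y w) = rc y (lb x w) + rc (br x y) w"
        "lb x (lc y w) = lc (br x y) w + lc y (lb x w)"
        "rb x (rc y w) = rc (br y x) w + lc y (rb x w)"
        "lb (circ x y) w = lc x (lb y w) + lc y (lb x w)"
        "rb x (lc y w - rc y w) = 0"
        "rc x (lb y w + rb y w) = 0"
        "lc (br x y + br y x) w = 0"
  using rep unfolding dpp_rep_on_def by auto

lemma vsV: "vector_space sV" using rep unfolding dpp_rep_on_def by auto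

lemma LA: "lin_action_on sA UNIV sV UNIV lc" "lin_action_on sA UNIV sV UNIV rc"
  "lin_action_on sA UNIV sV UNIV lb" "lin_action_on sA UNIV sV UNIV rb"
  using rep unfolding dpp_rep_on_def by auto

lemma additive_facts:
  fixes g :: "'b::ab_group_add \<Rightarrow> 'c::ab_group_add"
  assumes add: "\<And>a b. g (a + b) = g a + g b"
  shows "g 0 = 0" "g (- a) = - g a" "g (a - b) = g a - g b"
proof -
  show z: "g 0 = 0" using add[of 0 0] by simp
  have n: "g (- c) = - g c" for c
  proof -
    have "g c + g (- c) = 0" using add[of c "-c"] z by simp
    then show ?thesis by (simp add: eq_neg_iff_add_eq_0 add.commute)
  qed
  show "g (- a) = - g a" by (rule n)
  show "g (a - b) = g a - g b" using add[of a "-b"] n[of b] by simp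
qed

lemma addact:
  assumes "lin_action_on sA UNIV sV UNIV f"
  shows "f x (a + b) = f x a + f x b" "f x (a - b) = f x a - f x b" "f x (- a) = - f x a"
    "f x 0 = 0" "f (x + y) a = f x a + f y a" "f x (sV c a) = sV c (f x a)" "f (sA c x) a = sV c (f x a)"
    "f (x - y) a = f x a - f y a" "f (- x) a = - f x a" "f 0 a = 0"
proof -
  have add: "\<And>a b. f x (a + b) = f x a + f x b" using assms unfolding lin_action_on_def by auto
  have add2: "\<And>x y. f (x + y) a = f x a + f y a" using assms unfolding lin_action_on_def by auto
  show "f x (a + b) = f x a + f x b" by (rule add)
  show "f x (a - b) = f x a - f x b" "f x (- a) = - f x a" "f x 0 = 0"
    using additive_facts[of "f x", OF add] by auto
  show "f (x + y) a = f x a + f y a" by (rule add2)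
  show "f (x - y) a = f x a - f y a" "f (- x) a = - f x a" "f 0 a = 0"
    using additive_facts[of "\<lambda>x. f x a", OF add2] by auto
  show "f x (sV c a) = sV c (f x a)" "f (sA c x) a = sV c (f x a)"
    using assms unfolding lin_action_on_def by auto
qed

lemmas lc_lin = addact[OF LA(1)]
lemmas rc_lin = addact[OF LA(2)]
lemmas lb_lin = addact[OF LA(3)]
lemmas rb_lin = addact[OF LA(4)]


lemma phi_lin:
  assumes "\<phi> \<in> dual_space sV"
  shows "\<phi> (a + b) = \<phi> a + \<phi> b" "\<phi> (a - b) = \<phi> a - \<phi> b" "\<phi> (- a) = - \<phi> a" "\<phi> 0 = 0"
    "\<phi> (sV c a) = c * \<phi> a"
proof -
  have add: "\<And>a b. \<phi> (a + b) = \<phi> a + \<phi> b" and sc: "\<And>c a. \<phi> (sV c a) = c * \<phi> a"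
    using assms unfolding dual_space_def linear_iff by auto
  show "\<phi> (a + b) = \<phi> a + \<phi> b" "\<phi> (sV c a) = c * \<phi> a" by (rule add, rule sc)
  show "\<phi> (a - b) = \<phi> a - \<phi> b" "\<phi> (- a) = - \<phi> a" "\<phi> 0 = 0"
    using additive_facts[of \<phi>, OF add] by auto
qed

lemmas linsimps = lc_lin(1-5,8-10) rc_lin(1-5,8-10) lb_lin(1-5,8-10) rb_lin(1-5,8-10)


lemma diffz: "(a::'x::ab_group_add) = b \<Longrightarrow> a - b = 0" by simp
lemma lincomb: "a - b = S \<Longrightarrow> S = (0::'x::ab_group_add) \<Longrightarrow> a = b" by simp

lemma A: "circ x (circ y z) = circ (circ x y) z"
        "circ (circ x y) z = circ (circ y x) z"
        "br x (br y z) = br (br x y) z + br y (br x z)"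
        "br x (circ y z) = circ (br x y) z + circ y (br x z)"
        "br (circ x y) z = circ x (br y z) + circ y (br x z)"
        "circ (br x y) z = - circ (br y x) z"
  using alg unfolding dual_pre_poisson_on_def by blast+

lemma wR:
  assumes w: "w \<in> dual_space sV"
  shows
    "w (rc x (rc y p)) = w (rc (circ y x) p)"
    "w (rc (circ y x) p) = w (lc y (rc x p))"
    "w (lc y (rc x p)) = w (rc x (lc y p))"
    "w (lc (circ x y) p) = w (lc x (lc y p))"
    "w (lc x (lc y p)) = w (lc y (lc x p))"
    "w (lb (br x y) p) = w (lb x (lb y p)) - w (lb y (lb x p))"
    "w (rb (br x y) p) = w (rb y (rb x p)) + w (lb x (rb y p))"
    "w (rb x (rb y p)) = - w (rb x (lb y p))"
    "w (rb (circ x y) p) = w (rc y (rb x p)) + w (lc x (rb y p))"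
    "w (lb x (rc y p)) = w (rc y (lb x p)) + w (rc (br x y) p)"
    "w (lb x (lc y p)) = w (lc (br x y) p) + w (lc y (lb x p))"
    "w (rb x (rc y p)) = w (rc (br y x) p) + w (lc y (rb x p))"
    "w (lb (circ x y) p) = w (lc x (lb y p)) + w (lc y (lb x p))"
    "w (rb x (lc y p)) - w (rb x (rc y p)) = 0"
    "w (rc x (lb y p)) + w (rc x (rb y p)) = 0"
    "w (lc (br x y) p) + w (lc (br y x) p) = 0"
proof -
  note L = phi_lin[OF w] linsimps
  show "w (rc x (rc y p)) = w (rc (circ y x) p)" using R(1)[where x=x and y=y and w=p, THEN arg_cong[where f=w]] by (simp only: L)
  show "w (rc (circ y x) p) = w (lc y (rc x p))" using R(2)[where x=x and y=y and w=p, THEN arg_cong[where f=w]] by (simp only: L)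
  show "w (lc y (rc x p)) = w (rc x (lc y p))" using R(3)[where x=x and y=y and w=p, THEN arg_cong[where f=w]] by (simp only: L)
  show "w (lc (circ x y) p) = w (lc x (lc y p))" using R(4)[where x=x and y=y and w=p, THEN arg_cong[where f=w]] by (simp only: L)
  show "w (lc x (lc y p)) = w (lc y (lc x p))" using R(5)[where x=x and y=y and w=p, THEN arg_cong[where f=w]] by (simp only: L)
  show "w (lb (br x y) p) = w (lb x (lb y p)) - w (lb y (lb x p))" using R(6)[where x=x and y=y and w=p, THEN arg_cong[where f=w]] by (simp only: L)
  show "w (rb (br x y) p) = w (rb y (rb x p)) + w (lb x (rb y p))" using R(7)[where x=x and y=y and w=p, THEN arg_cong[where f=w]] by (simp only: L)
  show "w (rb x (rb y p)) = - w (rb x (lb y p))" using R(8)[where x=x and y=y and w=p, THEN arg_cong[where f=w]] by (simp only: L)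
  show "w (rb (circ x y) p) = w (rc y (rb x p)) + w (lc x (rb y p))" using R(9)[where x=x and y=y and w=p, THEN arg_cong[where f=w]] by (simp only: L)
  show "w (lb x (rc y p)) = w (rc y (lb x p)) + w (rc (br x y) p)" using R(10)[where x=x and y=y and w=p, THEN arg_cong[where f=w]] by (simp only: L)
  show "w (lb x (lc y p)) = w (lc (br x y) p) + w (lc y (lb x p))" using R(11)[where x=x and y=y and w=p, THEN arg_cong[where f=w]] by (simp only: L)
  show "w (rb x (rc y p)) = w (rc (br y x) p) + w (lc y (rb x p))" using R(12)[where x=x and y=y and w=p, THEN arg_cong[where f=w]] by (simp only: L)
  show "w (lb (circ x y) p) = w (lc x (lb y p)) + w (lc y (lb x p))" using R(13)[where x=x and y=y and w=p, THEN arg_cong[where f=w]] by (simp only: L)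
  show "w (rb x (lc y p)) - w (rb x (rc y p)) = 0" using R(14)[where x=x and y=y and w=p, THEN arg_cong[where f=w]] by (simp only: L)
  show "w (rc x (lb y p)) + w (rc x (rb y p)) = 0" using R(15)[where x=x and y=y and w=p, THEN arg_cong[where f=w]] by (simp only: L)
  show "w (lc (br x y) p) + w (lc (br y x) p) = 0" using R(16)[where x=x and y=y and w=p, THEN arg_cong[where f=w]] by (simp only: L)
qed

lemma d1:
  assumes w: "w \<in> dual_space sV"
  shows "(- dual_op lc x + dual_op rc x) ((- dual_op lc y + dual_op rc y) w) = (- dual_op lc (circ y x) + dual_op rc (circ y x)) w"
  apply (rule ext)
  subgoal for p
    apply (simp add: dual_op_def linsimps phi_lin[OF w])
    apply (rule lincomb[where S="(w (rc (circ y x) p) - (w (lc y (rc x p)))) + (w (rc y (rc x p)) - (w (rc (circ x y) p))) + (w (rc (circ x y) p) - (w (lc x (rc y p)))) + (w (lc x (rc y p)) - (w (rc y (lc x p)))) - (w (lc (circ y x) p) - (w (lc y (lc x p))))"])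
     apply (simp add: algebra_simps)
    apply (simp only: wR(2)[OF w, where x=x and y=y and p=p, THEN diffz] wR(1)[OF w, where x=y and y=x and p=p, THEN diffz] wR(2)[OF w, where x=y and y=x and p=p, THEN diffz] wR(3)[OF w, where x=y and y=x and p=p, THEN diffz] wR(4)[OF w, where x=y and y=x and p=p, THEN diffz]; simp?)
    done
  done

lemma d2:
  assumes w: "w \<in> dual_space sV"
  shows "(- dual_op lc (circ y x) + dual_op rc (circ y x)) w = (- dual_op lc y) ((- dual_op lc x + dual_op rc x) w)"
  apply (rule ext)
  subgoal for p
    apply (simp add: dual_op_def linsimps phi_lin[OF w])
    apply (rule lincomb[where S="- (w (rc (circ y x) p) - (w (lc y (rc x p)))) - (w (lc y (rc x p)) - (w (rc x (lc y p)))) - (w (lc x (lc y p)) - (w (lc y (lc x p)))) + (w (lc (circ y x) p) - (w (lc y (lc x p))))"])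
     apply (simp add: algebra_simps)
    apply (simp only: wR(2)[OF w, where x=x and y=y and p=p, THEN diffz] wR(3)[OF w, where x=x and y=y and p=p, THEN diffz] wR(5)[OF w, where x=x and y=y and p=p, THEN diffz] wR(4)[OF w, where x=y and y=x and p=p, THEN diffz]; simp?)
    done
  done

lemma d3:
  assumes w: "w \<in> dual_space sV"
  shows "(- dual_op lc y) ((- dual_op lc x + dual_op rc x) w) = (- dual_op lc x + dual_op rc x) ((- dual_op lc y) w)"
  apply (rule ext)
  subgoal for p
    apply (simp add: dual_op_def linsimps phi_lin[OF w])
    apply (rule lincomb[where S="(w (lc y (rc x p)) - (w (rc x (lc y p)))) + (w (lc x (lc y p)) - (w (lc y (lc x p))))"])
     apply (simp add: algebra_simps)
    apply (simp only: wR(3)[OF w, where x=x and y=y and p=p, THEN diffz] wR(5)[OF w, where x=x and y=y and p=p, THEN diffz]; simp?)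
    done
  done

lemma d4:
  assumes w: "w \<in> dual_space sV"
  shows "(- dual_op lc (circ x y)) w = (- dual_op lc x) ((- dual_op lc y) w)"
  apply (rule ext)
  subgoal for p
    apply (simp add: dual_op_def linsimps phi_lin[OF w])
    apply (rule lincomb[where S="(w (lc (circ x y) p) - (w (lc x (lc y p)))) + (w (lc x (lc y p)) - (w (lc y (lc x p))))"])
     apply (simp add: algebra_simps)
    apply (simp only: wR(4)[OF w, where x=x and y=y and p=p, THEN diffz] wR(5)[OF w, where x=x and y=y and p=p, THEN diffz]; simp?)
    done
  done

lemma d5:
  assumes w: "w \<in> dual_space sV"
  shows "(- dual_op lc x) ((- dual_op lc y) w) = (- dual_op lc y) ((- dual_op lc x) w)"
  apply (rule ext)
  subgoal for p
    apply (simp add: dual_op_def linsimps phi_lin[OF w])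
    apply (rule lincomb[where S="- (w (lc x (lc y p)) - (w (lc y (lc x p))))"])
     apply (simp add: algebra_simps)
    apply (simp only: wR(5)[OF w, where x=x and y=y and p=p, THEN diffz]; simp?)
    done
  done

lemma d6:
  assumes w: "w \<in> dual_space sV"
  shows "dual_op lb (br x y) w = dual_op lb x (dual_op lb y w) - dual_op lb y (dual_op lb x w)"
  apply (rule ext)
  subgoal for p
    apply (simp add: dual_op_def linsimps phi_lin[OF w])
    apply (rule lincomb[where S="- (w (lb (br x y) p) - (w (lb x (lb y p)) - w (lb y (lb x p))))"])
     apply (simp add: algebra_simps)
    apply (simp only: wR(6)[OF w, where x=x and y=y and p=p, THEN diffz]; simp?)
    done
  done

lemma d7:
  assumes w: "w \<in> dual_space sV"
  shows "(- dual_op lb (br x y) - dual_op rb (br x y)) w = (- dual_op lb y - dual_op rb y) ((- dual_op lb x - dual_op rb x) w) + dual_op lb x ((- dual_op lb y - dual_op rb y) w)"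
  apply (rule ext)
  subgoal for p
    apply (simp add: dual_op_def linsimps phi_lin[OF w])
    apply (rule lincomb[where S="(w (lb (br x y) p) - (w (lb x (lb y p)) - w (lb y (lb x p)))) + (w (rb (br x y) p) - (w (rb y (rb x p)) + w (lb x (rb y p)))) - (w (rb x (rb y p)) - (- w (rb x (lb y p)))) + (w (rb y (rb x p)) - (- w (rb y (lb x p))))"])
     apply (simp add: algebra_simps)
    apply (simp only: wR(6)[OF w, where x=x and y=y and p=p, THEN diffz] wR(7)[OF w, where x=x and y=y and p=p, THEN diffz] wR(8)[OF w, where x=x and y=y and p=p, THEN diffz] wR(8)[OF w, where x=y and y=x and p=p, THEN diffz]; simp?)
    done
  done

lemma d8:
  assumes w: "w \<in> dual_space sV"
  shows "(- dual_op lb x - dual_op rb x) ((- dual_op lb y - dual_op rb y) w) = - (- dual_op lb x - dual_op rb x) (dual_op lb y w)"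
  apply (rule ext)
  subgoal for p
    apply (simp add: dual_op_def linsimps phi_lin[OF w])
    apply (rule lincomb[where S="(w (rb y (rb x p)) - (- w (rb y (lb x p))))"])
     apply (simp add: algebra_simps)
    apply (simp only: wR(8)[OF w, where x=y and y=x and p=p, THEN diffz]; simp?)
    done
  done

lemma d9:
  assumes w: "w \<in> dual_space sV"
  shows "(- dual_op lb (circ x y) - dual_op rb (circ x y)) w = (- dual_op lc y + dual_op rc y) ((- dual_op lb x - dual_op rb x) w) + (- dual_op lc x) ((- dual_op lb y - dual_op rb y) w)"
  apply (rule ext)
  subgoal for p
    apply (simp add: dual_op_def linsimps phi_lin[OF w])
    apply (rule lincomb[where S="(w (rb (circ x y) p) - (w (rc y (rb x p)) + w (lc x (rb y p)))) + (w (lb x (rc y p)) - (w (rc y (lb x p)) + w (rc (br x y) p))) - (w (lb x (lc y p)) - (w (lc (br x y) p) + w (lc y (lb x p)))) + (w (lb (circ x y) p) - (w (lc x (lb y p)) + w (lc y (lb x p)))) - (w (rb x (lc y p)) - w (rb x (rc y p)) - (0)) - (w (lc (br x y) p) + w (lc (br y x) p) - (0)) - (w (lb y (lc x p)) - (w (lc (br y x) p) + w (lc x (lb y p)))) - (w (rb y (rc x p)) - (w (rc (br x y) p) + w (lc x (rb y p)))) - (w (rb y (lc x p)) - w (rb y (rc x p)) - (0)) + (w (rc y (lb x p)) + w (rc y (rb x p)) - (0))"])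
     apply (simp add: algebra_simps)
    apply (simp only: wR(9)[OF w, where x=x and y=y and p=p, THEN diffz] wR(10)[OF w, where x=x and y=y and p=p, THEN diffz] wR(11)[OF w, where x=x and y=y and p=p, THEN diffz] wR(13)[OF w, where x=x and y=y and p=p, THEN diffz] wR(14)[OF w, where x=x and y=y and p=p, THEN diffz] wR(16)[OF w, where x=x and y=y and p=p, THEN diffz] wR(11)[OF w, where x=y and y=x and p=p, THEN diffz] wR(12)[OF w, where x=y and y=x and p=p, THEN diffz] wR(14)[OF w, where x=y and y=x and p=p, THEN diffz] wR(15)[OF w, where x=y and y=x and p=p, THEN diffz]; simp?)
    done
  done

lemma d10:
  assumes w: "w \<in> dual_space sV"
  shows "dual_op lb x ((- dual_op lc y + dual_op rc y) w) = (- dual_op lc y + dual_op rc y) (dual_op lb x w) + (- dual_op lc (br x y) + dual_op rc (br x y)) w"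
  apply (rule ext)
  subgoal for p
    apply (simp add: dual_op_def linsimps phi_lin[OF w])
    apply (rule lincomb[where S="- (w (lb x (rc y p)) - (w (rc y (lb x p)) + w (rc (br x y) p))) + (w (lb x (lc y p)) - (w (lc (br x y) p) + w (lc y (lb x p))))"])
     apply (simp add: algebra_simps)
    apply (simp only: wR(10)[OF w, where x=x and y=y and p=p, THEN diffz] wR(11)[OF w, where x=x and y=y and p=p, THEN diffz]; simp?)
    done
  done

lemma d11:
  assumes w: "w \<in> dual_space sV"
  shows "dual_op lb x ((- dual_op lc y) w) = (- dual_op lc (br x y)) w + (- dual_op lc y) (dual_op lb x w)"
  apply (rule ext)
  subgoal for p
    apply (simp add: dual_op_def linsimps phi_lin[OF w])
    apply (rule lincomb[where S="(w (lb x (lc y p)) - (w (lc (br x y) p) + w (lc y (lb x p))))"])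
     apply (simp add: algebra_simps)
    apply (simp only: wR(11)[OF w, where x=x and y=y and p=p, THEN diffz]; simp?)
    done
  done

lemma d12:
  assumes w: "w \<in> dual_space sV"
  shows "(- dual_op lb x - dual_op rb x) ((- dual_op lc y + dual_op rc y) w) = (- dual_op lc (br y x) + dual_op rc (br y x)) w + (- dual_op lc y) ((- dual_op lb x - dual_op rb x) w)"
  apply (rule ext)
  subgoal for p
    apply (simp add: dual_op_def linsimps phi_lin[OF w])
    apply (rule lincomb[where S="- (w (lb x (lc y p)) - (w (lc (br x y) p) + w (lc y (lb x p)))) - (w (rb x (rc y p)) - (w (rc (br y x) p) + w (lc y (rb x p)))) - (w (rb x (lc y p)) - w (rb x (rc y p)) - (0)) - (w (lc (br x y) p) + w (lc (br y x) p) - (0)) - (w (rc y (lb x p)) + w (rc y (rb x p)) - (0))"])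
     apply (simp add: algebra_simps)
    apply (simp only: wR(11)[OF w, where x=x and y=y and p=p, THEN diffz] wR(12)[OF w, where x=x and y=y and p=p, THEN diffz] wR(14)[OF w, where x=x and y=y and p=p, THEN diffz] wR(16)[OF w, where x=x and y=y and p=p, THEN diffz] wR(15)[OF w, where x=y and y=x and p=p, THEN diffz]; simp?)
    done
  done

lemma d13:
  assumes w: "w \<in> dual_space sV"
  shows "dual_op lb (circ x y) w = (- dual_op lc x) (dual_op lb y w) + (- dual_op lc y) (dual_op lb x w)"
  apply (rule ext)
  subgoal for p
    apply (simp add: dual_op_def linsimps phi_lin[OF w])
    apply (rule lincomb[where S="(w (lb x (lc y p)) - (w (lc (br x y) p) + w (lc y (lb x p)))) - (w (lb (circ x y) p) - (w (lc x (lb y p)) + w (lc y (lb x p)))) + (w (lc (br x y) p) + w (lc (br y x) p) - (0)) + (w (lb y (lc x p)) - (w (lc (br y x) p) + w (lc x (lb y p))))"])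
     apply (simp add: algebra_simps)
    apply (simp only: wR(11)[OF w, where x=x and y=y and p=p, THEN diffz] wR(13)[OF w, where x=x and y=y and p=p, THEN diffz] wR(16)[OF w, where x=x and y=y and p=p, THEN diffz] wR(11)[OF w, where x=y and y=x and p=p, THEN diffz]; simp?)
    done
  done

lemma d14:
  assumes w: "w \<in> dual_space sV"
  shows "(- dual_op lb x - dual_op rb x) ((- dual_op lc y) w - (- dual_op lc y + dual_op rc y) w) = 0"
  apply (rule ext)
  subgoal for p
    apply (simp add: dual_op_def linsimps phi_lin[OF w])
    apply (rule lincomb[where S="(w (rc y (lb x p)) + w (rc y (rb x p)) - (0))"])
     apply (simp add: algebra_simps)
    apply (simp only: wR(15)[OF w, where x=y and y=x and p=p, THEN diffz]; simp?)
    done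
  done

lemma d15:
  assumes w: "w \<in> dual_space sV"
  shows "(- dual_op lc x + dual_op rc x) (dual_op lb y w + (- dual_op lb y - dual_op rb y) w) = 0"
  apply (rule ext)
  subgoal for p
    apply (simp add: dual_op_def linsimps phi_lin[OF w])
    apply (rule lincomb[where S="(w (rb y (lc x p)) - w (rb y (rc x p)) - (0))"])
     apply (simp add: algebra_simps)
    apply (simp only: wR(14)[OF w, where x=y and y=x and p=p, THEN diffz]; simp?)
    done
  done

lemma d16:
  assumes w: "w \<in> dual_space sV"
  shows "(- dual_op lc (br x y + br y x)) w = 0"
  apply (rule ext)
  subgoal for p
    apply (simp add: dual_op_def linsimps phi_lin[OF w])
    apply (rule lincomb[where S="(w (lc (br x y) p) + w (lc (br y x) p) - (0))"])
     apply (simp add: algebra_simps)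
    apply (simp only: wR(16)[OF w, where x=x and y=y and p=p, THEN diffz]; simp?)
    done
  done
lemma s1:
  assumes u: "u \<in> dual_space sV" and v: "v \<in> dual_space sV" and w: "w \<in> dual_space sV"
  shows "(\<lambda>(x, u) (y, v). (circ x y, - dual_op lc x v + (- dual_op lc y u + dual_op rc y u))) (x, u) ((\<lambda>(x, u) (y, v). (circ x y, - dual_op lc x v + (- dual_op lc y u + dual_op rc y u))) (y, v) (z, w)) = (\<lambda>(x, u) (y, v). (circ x y, - dual_op lc x v + (- dual_op lc y u + dual_op rc y u))) ((\<lambda>(x, u) (y, v). (circ x y, - dual_op lc x v + (- dual_op lc y u + dual_op rc y u))) (x, u) (y, v)) (z, w)"
  apply (simp only: prod.case add_Pair uminus_Pair prod.inject)
  apply (rule conjI)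
   apply (rule A(1))
  apply (rule ext)
  subgoal for p
    apply (simp add: dual_op_def linsimps phi_lin[OF u] phi_lin[OF v] phi_lin[OF w])
    apply (rule lincomb[where S="- (u (rc y (rc z p)) - (u (rc (circ z y) p))) - (u (rc (circ z y) p) - (u (lc z (rc y p)))) - (u (lc z (rc y p)) - (u (rc y (lc z p)))) + (u (lc (circ y z) p) - (u (lc y (lc z p)))) - (u (rc (circ y z) p) - (u (lc y (rc z p)))) - (v (lc x (lc z p)) - (v (lc z (lc x p)))) + (v (lc x (rc z p)) - (v (rc z (lc x p)))) - (w (lc (circ x y) p) - (w (lc x (lc y p)))) - (w (lc x (lc y p)) - (w (lc y (lc x p))))"])
     apply (simp add: algebra_simps)
    apply (simp only: wR(1)[OF u, where x=y and y=z and p=p, THEN diffz] wR(2)[OF u, where x=y and y=z and p=p, THEN diffz] wR(3)[OF u, where x=y and y=z and p=p, THEN diffz] wR(4)[OF u, where x=y and y=z and p=p, THEN diffz] wR(2)[OF u, where x=z and y=y and p=p, THEN diffz] wR(5)[OF v, where x=x and y=z and p=p, THEN diffz] wR(3)[OF v, where x=z and y=x and p=p, THEN diffz] wR(4)[OF w, where x=x and y=y and p=p, THEN diffz] wR(5)[OF w, where x=x and y=y and p=p, THEN diffz]; simp?)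
    done
  done

lemma s2:
  assumes u: "u \<in> dual_space sV" and v: "v \<in> dual_space sV" and w: "w \<in> dual_space sV"
  shows "(\<lambda>(x, u) (y, v). (circ x y, - dual_op lc x v + (- dual_op lc y u + dual_op rc y u))) ((\<lambda>(x, u) (y, v). (circ x y, - dual_op lc x v + (- dual_op lc y u + dual_op rc y u))) (x, u) (y, v)) (z, w) = (\<lambda>(x, u) (y, v). (circ x y, - dual_op lc x v + (- dual_op lc y u + dual_op rc y u))) ((\<lambda>(x, u) (y, v). (circ x y, - dual_op lc x v + (- dual_op lc y u + dual_op rc y u))) (y, v) (x, u)) (z, w)"
  apply (simp only: prod.case add_Pair uminus_Pair prod.inject)
  apply (rule conjI)
   apply (rule A(2))
  apply (rule ext)
  subgoal for p
    apply (simp add: dual_op_def linsimps phi_lin[OF u] phi_lin[OF v] phi_lin[OF w])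
    apply (rule lincomb[where S="(u (rc y (rc z p)) - (u (rc (circ z y) p))) + (u (rc (circ z y) p) - (u (lc z (rc y p)))) + (u (lc z (rc y p)) - (u (rc y (lc z p)))) - (v (rc x (rc z p)) - (v (rc (circ z x) p))) - (v (rc (circ z x) p) - (v (lc z (rc x p)))) - (v (lc z (rc x p)) - (v (rc x (lc z p)))) + (w (lc (circ x y) p) - (w (lc x (lc y p)))) + (w (lc x (lc y p)) - (w (lc y (lc x p)))) - (w (lc (circ y x) p) - (w (lc y (lc x p))))"])
     apply (simp add: algebra_simps)
    apply (simp only: wR(1)[OF u, where x=y and y=z and p=p, THEN diffz] wR(2)[OF u, where x=y and y=z and p=p, THEN diffz] wR(3)[OF u, where x=y and y=z and p=p, THEN diffz] wR(1)[OF v, where x=x and y=z and p=p, THEN diffz] wR(2)[OF v, where x=x and y=z and p=p, THEN diffz] wR(3)[OF v, where x=x and y=z and p=p, THEN diffz] wR(4)[OF w, where x=x and y=y and p=p, THEN diffz] wR(5)[OF w, where x=x and y=y and p=p, THEN diffz] wR(4)[OF w, where x=y and y=x and p=p, THEN diffz]; simp?)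
    done
  done

lemma s3:
  assumes u: "u \<in> dual_space sV" and v: "v \<in> dual_space sV" and w: "w \<in> dual_space sV"
  shows "(\<lambda>(x, u) (y, v). (br x y, dual_op lb x v - (dual_op lb y u + dual_op rb y u))) (x, u) ((\<lambda>(x, u) (y, v). (br x y, dual_op lb x v - (dual_op lb y u + dual_op rb y u))) (y, v) (z, w)) = (\<lambda>(x, u) (y, v). (br x y, dual_op lb x v - (dual_op lb y u + dual_op rb y u))) ((\<lambda>(x, u) (y, v). (br x y, dual_op lb x v - (dual_op lb y u + dual_op rb y u))) (x, u) (y, v)) (z, w) + (\<lambda>(x, u) (y, v). (br x y, dual_op lb x v - (dual_op lb y u + dual_op rb y u))) (y, v) ((\<lambda>(x, u) (y, v). (br x y, dual_op lb x v - (dual_op lb y u + dual_op rb y u))) (x, u) (z, w))"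
  apply (simp only: prod.case add_Pair uminus_Pair prod.inject)
  apply (rule conjI)
   apply (rule A(3))
  apply (rule ext)
  subgoal for p
    apply (simp add: dual_op_def linsimps phi_lin[OF u] phi_lin[OF v] phi_lin[OF w])
    apply (rule lincomb[where S="(u (lb (br y z) p) - (u (lb y (lb z p)) - u (lb z (lb y p)))) + (u (rb (br y z) p) - (u (rb z (rb y p)) + u (lb y (rb z p)))) - (u (rb y (rb z p)) - (- u (rb y (lb z p)))) + (u (rb z (rb y p)) - (- u (rb z (lb y p)))) - (v (lb (br x z) p) - (v (lb x (lb z p)) - v (lb z (lb x p)))) - (v (rb (br x z) p) - (v (rb z (rb x p)) + v (lb x (rb z p)))) - (v (rb z (rb x p)) - (- v (rb z (lb x p)))) + (w (lb (br x y) p) - (w (lb x (lb y p)) - w (lb y (lb x p))))"])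
     apply (simp add: algebra_simps)
    apply (simp only: wR(6)[OF u, where x=y and y=z and p=p, THEN diffz] wR(7)[OF u, where x=y and y=z and p=p, THEN diffz] wR(8)[OF u, where x=y and y=z and p=p, THEN diffz] wR(8)[OF u, where x=z and y=y and p=p, THEN diffz] wR(6)[OF v, where x=x and y=z and p=p, THEN diffz] wR(7)[OF v, where x=x and y=z and p=p, THEN diffz] wR(8)[OF v, where x=z and y=x and p=p, THEN diffz] wR(6)[OF w, where x=x and y=y and p=p, THEN diffz]; simp?)
    done
  done

lemma s4:
  assumes u: "u \<in> dual_space sV" and v: "v \<in> dual_space sV" and w: "w \<in> dual_space sV"
  shows "(\<lambda>(x, u) (y, v). (br x y, dual_op lb x v - (dual_op lb y u + dual_op rb y u))) (x, u) ((\<lambda>(x, u) (y, v). (circ x y, - dual_op lc x v + (- dual_op lc y u + dual_op rc y u))) (y, v) (z, w)) = (\<lambda>(x, u) (y, v). (circ x y, - dual_op lc x v + (- dual_op lc y u + dual_op rc y u))) ((\<lambda>(x, u) (y, v). (br x y, dual_op lb x v - (dual_op lb y u + dual_op rb y u))) (x, u) (y, v)) (z, w) + (\<lambda>(x, u) (y, v). (circ x y, - dual_op lc x v + (- dual_op lc y u + dual_op rc y u))) (y, v) ((\<lambda>(x, u) (y, v). (br x y, dual_op lb x v - (dual_op lb y u + dual_op rb y u))) (x, u) (z, w))"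
  apply (simp only: prod.case add_Pair uminus_Pair prod.inject)
  apply (rule conjI)
   apply (rule A(4))
  apply (rule ext)
  subgoal for p
    apply (simp add: dual_op_def linsimps phi_lin[OF u] phi_lin[OF v] phi_lin[OF w])
    apply (rule lincomb[where S="(u (rb (circ y z) p) - (u (rc z (rb y p)) + u (lc y (rb z p)))) + (u (lb y (rc z p)) - (u (rc z (lb y p)) + u (rc (br y z) p))) - (u (lb y (lc z p)) - (u (lc (br y z) p) + u (lc z (lb y p)))) + (u (lb (circ y z) p) - (u (lc y (lb z p)) + u (lc z (lb y p)))) - (u (rb y (lc z p)) - u (rb y (rc z p)) - (0)) - (u (lc (br y z) p) + u (lc (br z y) p) - (0)) - (u (lb z (lc y p)) - (u (lc (br z y) p) + u (lc y (lb z p)))) - (u (rb z (rc y p)) - (u (rc (br y z) p) + u (lc y (rb z p)))) - (u (rb z (lc y p)) - u (rb z (rc y p)) - (0)) + (u (rc z (lb y p)) + u (rc z (rb y p)) - (0)) - (v (lb x (rc z p)) - (v (rc z (lb x p)) + v (rc (br x z) p))) + (v (lb x (lc z p)) - (v (lc (br x z) p) + v (lc z (lb x p)))) + (w (lb x (lc y p)) - (w (lc (br x y) p) + w (lc y (lb x p))))"])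
     apply (simp add: algebra_simps)
    apply (simp only: wR(9)[OF u, where x=y and y=z and p=p, THEN diffz] wR(10)[OF u, where x=y and y=z and p=p, THEN diffz] wR(11)[OF u, where x=y and y=z and p=p, THEN diffz] wR(13)[OF u, where x=y and y=z and p=p, THEN diffz] wR(14)[OF u, where x=y and y=z and p=p, THEN diffz] wR(16)[OF u, where x=y and y=z and p=p, THEN diffz] wR(11)[OF u, where x=z and y=y and p=p, THEN diffz] wR(12)[OF u, where x=z and y=y and p=p, THEN diffz] wR(14)[OF u, where x=z and y=y and p=p, THEN diffz] wR(15)[OF u, where x=z and y=y and p=p, THEN diffz] wR(10)[OF v, where x=x and y=z and p=p, THEN diffz] wR(11)[OF v, where x=x and y=z and p=p, THEN diffz] wR(11)[OF w, where x=x and y=y and p=p, THEN diffz]; simp?)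
    done
  done

lemma s5:
  assumes u: "u \<in> dual_space sV" and v: "v \<in> dual_space sV" and w: "w \<in> dual_space sV"
  shows "(\<lambda>(x, u) (y, v). (br x y, dual_op lb x v - (dual_op lb y u + dual_op rb y u))) ((\<lambda>(x, u) (y, v). (circ x y, - dual_op lc x v + (- dual_op lc y u + dual_op rc y u))) (x, u) (y, v)) (z, w) = (\<lambda>(x, u) (y, v). (circ x y, - dual_op lc x v + (- dual_op lc y u + dual_op rc y u))) (x, u) ((\<lambda>(x, u) (y, v). (br x y, dual_op lb x v - (dual_op lb y u + dual_op rb y u))) (y, v) (z, w)) + (\<lambda>(x, u) (y, v). (circ x y, - dual_op lc x v + (- dual_op lc y u + dual_op rc y u))) (y, v) ((\<lambda>(x, u) (y, v). (br x y, dual_op lb x v - (dual_op lb y u + dual_op rb y u))) (x, u) (z, w))"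
  apply (simp only: prod.case add_Pair uminus_Pair prod.inject)
  apply (rule conjI)
   apply (rule A(5))
  apply (rule ext)
  subgoal for p
    apply (simp add: dual_op_def linsimps phi_lin[OF u] phi_lin[OF v] phi_lin[OF w])
    apply (rule lincomb[where S="- (u (rc y (lb z p)) + u (rc y (rb z p)) - (0)) - (u (lc (br y z) p) + u (lc (br z y) p) - (0)) - (u (lb z (lc y p)) - (u (lc (br z y) p) + u (lc y (lb z p)))) - (u (rb z (rc y p)) - (u (rc (br y z) p) + u (lc y (rb z p)))) - (u (rb z (lc y p)) - u (rb z (rc y p)) - (0)) - (v (lc (br x z) p) + v (lc (br z x) p) - (0)) - (v (lb z (lc x p)) - (v (lc (br z x) p) + v (lc x (lb z p)))) - (v (rb z (rc x p)) - (v (rc (br x z) p) + v (lc x (rb z p)))) - (v (rb z (lc x p)) - v (rb z (rc x p)) - (0)) + (w (lb x (lc y p)) - (w (lc (br x y) p) + w (lc y (lb x p)))) - (w (lb (circ x y) p) - (w (lc x (lb y p)) + w (lc y (lb x p)))) + (w (lc (br x y) p) + w (lc (br y x) p) - (0)) + (w (lb y (lc x p)) - (w (lc (br y x) p) + w (lc x (lb y p))))"])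
     apply (simp add: algebra_simps)
    apply (simp only: wR(15)[OF u, where x=y and y=z and p=p, THEN diffz] wR(16)[OF u, where x=y and y=z and p=p, THEN diffz] wR(11)[OF u, where x=z and y=y and p=p, THEN diffz] wR(12)[OF u, where x=z and y=y and p=p, THEN diffz] wR(14)[OF u, where x=z and y=y and p=p, THEN diffz] wR(16)[OF v, where x=x and y=z and p=p, THEN diffz] wR(11)[OF v, where x=z and y=x and p=p, THEN diffz] wR(12)[OF v, where x=z and y=x and p=p, THEN diffz] wR(14)[OF v, where x=z and y=x and p=p, THEN diffz] wR(11)[OF w, where x=x and y=y and p=p, THEN diffz] wR(13)[OF w, where x=x and y=y and p=p, THEN diffz] wR(16)[OF w, where x=x and y=y and p=p, THEN diffz] wR(11)[OF w, where x=y and y=x and p=p, THEN diffz]; simp?)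
    done
  done

lemma s6:
  assumes u: "u \<in> dual_space sV" and v: "v \<in> dual_space sV" and w: "w \<in> dual_space sV"
  shows "(\<lambda>(x, u) (y, v). (circ x y, - dual_op lc x v + (- dual_op lc y u + dual_op rc y u))) ((\<lambda>(x, u) (y, v). (br x y, dual_op lb x v - (dual_op lb y u + dual_op rb y u))) (x, u) (y, v)) (z, w) = - (\<lambda>(x, u) (y, v). (circ x y, - dual_op lc x v + (- dual_op lc y u + dual_op rc y u))) ((\<lambda>(x, u) (y, v). (br x y, dual_op lb x v - (dual_op lb y u + dual_op rb y u))) (y, v) (x, u)) (z, w)"
  apply (simp only: prod.case add_Pair uminus_Pair prod.inject)
  apply (rule conjI)
   apply (rule A(6))
  apply (rule ext)
  subgoal for p
    apply (simp add: dual_op_def linsimps phi_lin[OF u] phi_lin[OF v] phi_lin[OF w])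
    apply (rule lincomb[where S="(u (rb y (lc z p)) - u (rb y (rc z p)) - (0)) + (v (rb x (lc z p)) - v (rb x (rc z p)) - (0)) + (w (lc (br x y) p) + w (lc (br y x) p) - (0))"])
     apply (simp add: algebra_simps)
    apply (simp only: wR(14)[OF u, where x=y and y=z and p=p, THEN diffz] wR(14)[OF v, where x=x and y=z and p=p, THEN diffz] wR(16)[OF w, where x=x and y=y and p=p, THEN diffz]; simp?)
    done
  done

lemma vs_mult: "vector_space ((*) :: 'f \<Rightarrow> 'f \<Rightarrow> 'f)"
  unfolding vector_space_def by (simp add: algebra_simps)

lemma vsD: "vector_space (dual_scale :: 'f \<Rightarrow> ('v \<Rightarrow> 'f) \<Rightarrow> ('v \<Rightarrow> 'f))"
  unfolding vector_space_def dual_scale_def by (simp add: fun_eq_iff algebra_simps)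

lemma vsA: "vector_space sA" using alg unfolding dual_pre_poisson_on_def by blast

lemma mem_dual: "\<phi> \<in> dual_space sV \<longleftrightarrow> (\<forall>a b. \<phi> (a + b) = \<phi> a + \<phi> b) \<and> (\<forall>c a. \<phi> (sV c a) = c * \<phi> a)"
  unfolding dual_space_def linear_iff using vsV vs_mult by auto

lemma dual_closed:
  assumes "\<phi> \<in> dual_space sV" "\<psi> \<in> dual_space sV"
  shows "\<phi> + \<psi> \<in> dual_space sV" "- \<phi> \<in> dual_space sV" "\<phi> - \<psi> \<in> dual_space sV"
    "dual_scale c \<phi> \<in> dual_space sV" "(0::'v \<Rightarrow> 'f) \<in> dual_space sV"
  using assms unfolding mem_dual dual_scale_def by (auto simp: algebra_simps)

lemma dual_op_mem:
  assumes "\<phi> \<in> dual_space sV" "lin_action_on sA UNIV sV UNIV f"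
  shows "dual_op f x \<phi> \<in> dual_space sV"
  using assms(1) unfolding mem_dual dual_op_def by (auto simp: addact[OF assms(2)] algebra_simps)

lemmas dual_mems = dual_op_mem[OF _ LA(1)] dual_op_mem[OF _ LA(2)] dual_op_mem[OF _ LA(3)] dual_op_mem[OF _ LA(4)]

lemma zero_dual: "(0::'v \<Rightarrow> 'f) \<in> dual_space sV" unfolding mem_dual by simp

lemma subD: "module.subspace dual_scale (dual_space sV)"
  unfolding module.subspace_def[OF vsD[unfolded module_iff_vector_space[symmetric]]]
  using dual_closed(1,4) zero_dual by blast

lemma linact:
  "lin_action_on sA UNIV dual_scale (dual_space sV) (\<lambda>x. - dual_op lc x)"
  "lin_action_on sA UNIV dual_scale (dual_space sV) (\<lambda>x. - dual_op lc x + dual_op rc x)"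
  "lin_action_on sA UNIV dual_scale (dual_space sV) (\<lambda>x. dual_op lb x)"
  "lin_action_on sA UNIV dual_scale (dual_space sV) (\<lambda>x. - dual_op lb x - dual_op rb x)"
  unfolding lin_action_on_def
  by (intro conjI ballI allI;
      (simp add: dual_closed dual_mems; fail)?;
      rule ext; simp add: dual_op_def dual_scale_def linsimps lc_lin(6,7) rc_lin(6,7) lb_lin(6,7) rb_lin(6,7) phi_lin algebra_simps)+


lemma vsS: "vector_space (sum_scale sA :: 'f \<Rightarrow> 'a \<times> ('v \<Rightarrow> 'f) \<Rightarrow> 'a \<times> ('v \<Rightarrow> 'f))"
  using vsA unfolding vector_space_def sum_scale_def dual_scale_def
  by (simp add: fun_eq_iff algebra_simps)

lemma subS: "module.subspace (sum_scale sA) (UNIV \<times> dual_space sV)"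
  unfolding module.subspace_def[OF vsS[unfolded module_iff_vector_space[symmetric]]]
  using dual_closed(1,4) zero_dual by (auto simp: sum_scale_def zero_prod_def)

lemma Bi: "circ (x + y) z = circ x z + circ y z" "circ x (y + z) = circ x y + circ x z"
  "circ (sA c x) y = sA c (circ x y)" "circ x (sA c y) = sA c (circ x y)"
  "br (x + y) z = br x z + br y z" "br x (y + z) = br x y + br x z"
  "br (sA c x) y = sA c (br x y)" "br x (sA c y) = sA c (br x y)"
  using alg unfolding dual_pre_poisson_on_def bilinear_on_def by blast+

lemma bilC: "bilinear_on (sum_scale sA) (UNIV \<times> dual_space sV)
   (\<lambda>(x, u) (y, v). (circ x y, - dual_op lc x v + (- dual_op lc y u + dual_op rc y u)))"
  unfolding bilinear_on_def
  apply (intro conjI)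
   apply (auto simp: dual_closed dual_mems)[1]
  by (auto simp: dual_closed dual_mems sum_scale_def Bi fun_eq_iff dual_op_def dual_scale_def
      linsimps lc_lin(6,7) rc_lin(6,7) lb_lin(6,7) rb_lin(6,7) phi_lin algebra_simps)

lemma bilB: "bilinear_on (sum_scale sA) (UNIV \<times> dual_space sV)
   (\<lambda>(x, u) (y, v). (br x y, dual_op lb x v - (dual_op lb y u + dual_op rb y u)))"
  unfolding bilinear_on_def
  apply (intro conjI)
   apply (auto simp: dual_closed dual_mems)[1]
  by (auto simp: dual_closed dual_mems sum_scale_def Bi fun_eq_iff dual_op_def dual_scale_def
      linsimps lc_lin(6,7) rc_lin(6,7) lb_lin(6,7) rb_lin(6,7) phi_lin algebra_simps)

end

theorem proposition2p30:
  fixes sA :: "'f::field_char_0 \<Rightarrow> 'a::ab_group_add \<Rightarrow> 'a"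
    and circ br :: "'a \<Rightarrow> 'a \<Rightarrow> 'a"
    and sV :: "'f \<Rightarrow> 'v::ab_group_add \<Rightarrow> 'v"
    and lc rc lb rb :: "'a \<Rightarrow> 'v \<Rightarrow> 'v"
  assumes alg: "dual_pre_poisson_on sA UNIV circ br"
    and rep: "dpp_rep_on sA UNIV circ br sV UNIV lc rc lb rb"
    and fin: "\<exists>B. finite_dimensional_vector_space sV B"
  shows "dpp_rep_on sA UNIV circ br dual_scale (dual_space sV)
           (\<lambda>x. - dual_op lc x)
           (\<lambda>x. - dual_op lc x + dual_op rc x)
           (\<lambda>x. dual_op lb x)
           (\<lambda>x. - dual_op lb x - dual_op rb x)
       \<and> dual_pre_poisson_on (sum_scale sA) (UNIV \<times> dual_space sV)
           (\<lambda>(x, u) (y, v). (circ x y, - dual_op lc x v + (- dual_op lc y u + dual_op rc y u)))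
           (\<lambda>(x, u) (y, v). (br x y, dual_op lb x v - (dual_op lb y u + dual_op rb y u)))"
proof -
  interpret ctx sA circ br sV lc rc lb rb by (rule ctx.intro[OF alg rep])
  show ?thesis
    apply (rule conjI)
    subgoal
      unfolding dpp_rep_on_def
      apply (intro conjI vsD subD linact ballI)
      by (rule d1 d2 d3 d4 d5 d6 d7 d8 d9 d10 d11 d12 d13 d14 d15 d16; assumption)+
    subgoal
      unfolding dual_pre_poisson_on_def
      apply (intro conjI vsS subS bilC bilB)
      apply (rule trip_ball)
      apply (intro conjI)
      by (rule s1 s2 s3 s4 s5 s6; assumption)+
    done
qed

end
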